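(* For all integers $n\ge m\ge k+1\ge 3$, $\Gamma_{\times k,t}(K_n\,\Box\,K_m)\ge kn$.
   Context: A set $S\subseteq V(G)$ is a $k$-tuple total dominating set ($k$TDS) of a graph $G$ with $\delta(G)\ge k$ if $|N_G(x)\cap S|\ge k$ for every $x\in V(G)$. The upper $k$-tuple total domination number $\Gamma_{\times k,t}(G)$ is the maximum cardinality of a minimal (with respect to inclusion) $k$TDS of $G$. The Cartesian product $G\,\Box\,H$ has vertex set $V(G)\times V(H)$, with $(g_1,h_1)\sim(g_2,h_2)$ iff either $g_1=g_2$ and $h_1h_2\in E(H)$, or $h_1=h_2$ and $g_1g_2\in E(G)$. *)

theory Defs
  imports Main
begin

text \<open>A (finite simple) graph is given by a vertex set V and a symmetric irreflexive
adjacency relation E.\<close>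

definition open_nbhd :: "'a set \<Rightarrow> ('a \<Rightarrow> 'a \<Rightarrow> bool) \<Rightarrow> 'a \<Rightarrow> 'a set" where
  "open_nbhd V E x = {y \<in> V. E x y}"

definition is_kTDS :: "'a set \<Rightarrow> ('a \<Rightarrow> 'a \<Rightarrow> bool) \<Rightarrow> nat \<Rightarrow> 'a set \<Rightarrow> bool" where
  "is_kTDS V E k S \<longleftrightarrow> S \<subseteq> V \<and> (\<forall>x\<in>V. card (open_nbhd V E x \<inter> S) \<ge> k)"

definition is_minimal_kTDS :: "'a set \<Rightarrow> ('a \<Rightarrow> 'a \<Rightarrow> bool) \<Rightarrow> nat \<Rightarrow> 'a set \<Rightarrow> bool" where
  "is_minimal_kTDS V E k S \<longleftrightarrow> is_kTDS V E k S \<and> (\<forall>T. T \<subset> S \<longrightarrow> \<not> is_kTDS V E k T)"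

definition upper_ktuple_tdom :: "'a set \<Rightarrow> ('a \<Rightarrow> 'a \<Rightarrow> bool) \<Rightarrow> nat \<Rightarrow> nat" where
  "upper_ktuple_tdom V E k = Max (card ` {S. is_minimal_kTDS V E k S})"

definition complete_V :: "nat \<Rightarrow> nat set" where
  "complete_V n = {0..<n}"

definition complete_E :: "nat \<Rightarrow> nat \<Rightarrow> bool" where
  "complete_E x y \<longleftrightarrow> x \<noteq> y"

definition box_V :: "'a set \<Rightarrow> 'b set \<Rightarrow> ('a \<times> 'b) set" where
  "box_V V1 V2 = V1 \<times> V2"

definition box_E :: "('a \<Rightarrow> 'a \<Rightarrow> bool) \<Rightarrow> ('b \<Rightarrow> 'b \<Rightarrow> bool) \<Rightarrow> 'a \<times> 'b \<Rightarrow> 'a \<times> 'b \<Rightarrow> bool" where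
  "box_E E1 E2 p q \<longleftrightarrow> (fst p = fst q \<and> E2 (snd p) (snd q)) \<or> (snd p = snd q \<and> E1 (fst p) (fst q))"

end

theory Submission
  imports Defs
begin

lemma nb_mem: "q \<in> open_nbhd V E p \<longleftrightarrow> q \<in> V \<and> E p q"
  by (simp add: open_nbhd_def)

theorem mainTheorem8:
  fixes n m k :: nat
  assumes "k + 1 \<ge> 3" and "m \<ge> k + 1" and "n \<ge> m"
  shows "upper_ktuple_tdom (box_V (complete_V n) (complete_V m)) (box_E complete_E complete_E) k \<ge> k * n"
proof -
  define V where "V = box_V (complete_V n) (complete_V m)"
  define E where "E = box_E complete_E complete_E"
  define S where "S = {0..<n} \<times> {0..<k}"
  have Vd: "V = {0..<n} \<times> {0..<m}" by (simp add: V_def box_V_def complete_V_def)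
  have Ed: "E p q \<longleftrightarrow> (fst p = fst q \<and> snd p \<noteq> snd q) \<or> (snd p = snd q \<and> fst p \<noteq> fst q)" for p q
    by (simp add: E_def box_E_def complete_E_def)
  have finV: "finite V" by (simp add: Vd)
  have SV: "S \<subseteq> V" using assms by (auto simp: S_def Vd)
  have kt: "is_kTDS V E k S"
    unfolding is_kTDS_def
  proof (intro conjI ballI SV)
    fix x assume xV: "x \<in> V"
    obtain i j where x: "x = (i,j)" by force
    have i: "i < n" and j: "j < m" using xV x Vd by auto
    have fin: "finite (open_nbhd V E x \<inter> S)" by (simp add: S_def)
    show "k \<le> card (open_nbhd V E x \<inter> S)"
    proof (cases "j < k")
      case False
      have "{i} \<times> {0..<k} \<subseteq> open_nbhd V E x \<inter> S"
        using False i assms by (auto simp: nb_mem x Ed Vd S_def)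
      from card_mono[OF fin this] show ?thesis by simp
    next
      case True
      define i' where "i' = (if i = 0 then 1 else 0::nat)"
      have i': "i' < n" "i' \<noteq> i" using assms by (auto simp: i'_def)
      have sub: "insert (i',j) ({i} \<times> ({0..<k} - {j})) \<subseteq> open_nbhd V E x \<inter> S"
        using True i i' assms j by (auto simp: nb_mem x Ed Vd S_def)
      have "card (insert (i',j) ({i} \<times> ({0..<k} - {j}))) = k"
        using True i' by (simp add: card_cartesian_product)
      with card_mono[OF fin sub] show ?thesis by simp
    qed
  qed
  have mk: "is_minimal_kTDS V E k S"
    unfolding is_minimal_kTDS_def
  proof (intro conjI allI impI kt)
    fix T assume TS: "T \<subset> S"
    then obtain i j where ij: "(i,j) \<in> S" "(i,j) \<notin> T" by auto
    have i: "i < n" and j: "j < k" using ij S_def by auto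
    have kV: "(i,k) \<in> V" using i assms by (simp add: Vd)
    have sub: "open_nbhd V E (i,k) \<inter> T \<subseteq> {i} \<times> ({0..<k} - {j})"
      using TS ij by (auto simp: nb_mem Ed S_def)
    have "card (open_nbhd V E (i,k) \<inter> T) \<le> card ({i} \<times> ({0..<k} - {j}))"
      by (rule card_mono[OF _ sub]) simp
    also have "\<dots> = k - 1" using j by (simp add: card_cartesian_product)
    finally have "card (open_nbhd V E (i,k) \<inter> T) < k" using j by linarith
    thus "\<not> is_kTDS V E k T" using kV unfolding is_kTDS_def by force
  qed
  have fin: "finite (card ` {S. is_minimal_kTDS V E k S})"
  proof -
    have "{S. is_minimal_kTDS V E k S} \<subseteq> Pow V"
      by (auto simp: is_minimal_kTDS_def is_kTDS_def)
    thus ?thesis using finV by (meson finite_Pow_iff finite_imageI rev_finite_subset)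
  qed
  have cS: "card S = k * n" by (simp add: S_def card_cartesian_product)
  have "card S \<le> Max (card ` {S. is_minimal_kTDS V E k S})"
    using mk fin by (intro Max_ge) auto
  thus ?thesis using cS by (simp add: upper_ktuple_tdom_def V_def E_def)
qed

end
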